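(* Let $p$ be a prime and $a_p(n)=\big[\frac{n}{p-1}\big]+v_p\big(\big[\frac{n}{p-1}\big]!\big)$ for integers $n\ge0$. Then $a_p(n)\geq a_p(k)+a_p(l)$ whenever $n\geq k+l$ (with $k,l\ge0$), and $a_p(m+n)\geq a_p(m+1)+v_p(n!)$ for all integers $m\ge 0$, $n\ge1$.
   Context: $[\alpha]$ denotes the integer part of $\alpha$ and $v_p$ the $p$-adic valuation. *)

theory Defs
  imports "HOL-Computational_Algebra.Primes"
begin

definition a_p :: "nat \<Rightarrow> nat \<Rightarrow> nat" where
  "a_p p n = n div (p - 1) + multiplicity p (fact (n div (p - 1)) :: nat)"

end

theory Submission
  imports Defs
begin

abbreviation g :: "nat \<Rightarrow> nat \<Rightarrow> nat" where
  "g p n \<equiv> multiplicity p (fact n :: nat)"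

lemma g_super:
  assumes "prime p"
  shows "g p a + g p b \<le> g p (a + b)"
proof -
  have d: "(fact a * fact b :: nat) dvd fact (a + b)"
  proof -
    have "fact a * fact (a + b - a) * ((a + b) choose a) = (fact (a + b) :: nat)"
      by (rule binomial_fact_lemma) simp
    then have "fact (a + b) = (fact a * fact b :: nat) * ((a + b) choose a)" by simp
    then show ?thesis by (rule dvdI)
  qed
  have "g p a + g p b = multiplicity p (fact a * fact b :: nat)"
    using assms by (simp add: prime_elem_multiplicity_mult_distrib)
  also have "\<dots> \<le> g p (a + b)"
    by (rule dvd_imp_multiplicity_le[OF d]) simp
  finally show ?thesis .
qed

lemma g_Suc:
  assumes "prime p"
  shows "g p (Suc n) = g p n + multiplicity p (Suc n)"
proof -
  have *: "multiplicity p (Suc n * fact n) = multiplicity p (Suc n) + g p n"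
    by (rule prime_elem_multiplicity_mult_distrib) (use assms in auto)
  have "(fact (Suc n) :: nat) = Suc n * fact n" by (simp only: fact_Suc of_nat_id)
  then show ?thesis unfolding * by (simp only: * add.commute)
qed

lemma g_rem:
  assumes "prime p" "r < p"
  shows "g p (p * j + r) = g p (p * j)"
  using assms(2)
proof (induction r)
  case 0 then show ?case by simp
next
  case (Suc r)
  have "\<not> p dvd Suc (p * j + r)"
  proof
    assume "p dvd Suc (p * j + r)"
    then have "p dvd Suc r"
    proof -
      have eq: "Suc (p * j + r) = p * j + Suc r" by simp
      have "p dvd p * j" by simp
      then show ?thesis using \<open>p dvd Suc (p * j + r)\<close> unfolding eq
        by (simp only: dvd_add_right_iff)
    qed
    then show False using Suc.prems by (auto dest: dvd_imp_le)
  qed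
  then have "multiplicity p (Suc (p * j + r)) = 0"
    by (simp add: not_dvd_imp_multiplicity_0)
  then show ?case using Suc g_Suc[OF assms(1), of "p * j + r"] by simp
qed

lemma g_mult:
  assumes "prime p"
  shows "g p (p * j) = j + g p j"
proof (induction j)
  case 0 then show ?case by simp
next
  case (Suc j)
  have p2: "p \<ge> 2" using assms prime_ge_2_nat by blast
  have e: "p * Suc j = Suc (p * j + (p - 1))" using p2 by simp
  have "multiplicity p (p * Suc j) = Suc (multiplicity p (Suc j))"
    using p2 by (subst multiplicity_times_same) auto
  moreover have "g p (Suc (p * j + (p - 1))) = g p (p * j + (p - 1)) + multiplicity p (Suc (p * j + (p - 1)))"
    by (rule g_Suc[OF assms])
  moreover have "g p (p * j + (p - 1)) = g p (p * j)"
    by (rule g_rem[OF assms]) (use p2 in simp)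
  moreover have "g p (Suc j) = g p j + multiplicity p (Suc j)" by (rule g_Suc[OF assms])
  ultimately show ?case using Suc.IH unfolding e[symmetric] by linarith
qed

lemma g_bound:
  assumes "prime p" "n \<ge> 1"
  shows "(p - 1) * g p n \<le> n - 1"
  using assms(2)
proof (induction n rule: less_induct)
  case (less n)
  have p2: "p \<ge> 2" using assms prime_ge_2_nat by blast
  define j where "j = n div p"
  define r where "r = n mod p"
  have n: "n = p * j + r" unfolding j_def r_def by simp
  have r: "r < p" unfolding r_def using p2 by simp
  have gn: "g p n = j + g p j"
    using n g_rem[OF assms(1) r, of j] g_mult[OF assms(1), of j] by simp
  show ?case
  proof (cases "j = 0")
    case True then show ?thesis using gn by simp
  next
    case False
    have "j < n" using n p2 False
      unfolding j_def using p2 less.prems by (intro div_less_dividend) auto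
    then have ih: "(p - 1) * g p j \<le> j - 1" using less.IH False by simp
    have "(p - 1) * g p n = (p - 1) * j + (p - 1) * g p j" using gn by (simp add: algebra_simps)
    also have "\<dots> \<le> (p - 1) * j + (j - 1)" using ih by simp
    also have "\<dots> = p * j - 1" using False p2 by (simp add: algebra_simps diff_mult_distrib)
    also have "\<dots> \<le> n - 1" using n by simp
    finally show ?thesis .
  qed
qed

lemma f_super:
  assumes "prime p"
  shows "(a + g p a) + (b + g p b) \<le> (a + b) + g p (a + b)"
  using g_super[OF assms, of a b] by simp

lemma f_mono:
  assumes "prime p" "a \<le> b"
  shows "a + g p a \<le> b + g p b"
  using f_super[OF assms(1), of a "b - a"] assms(2) by simp

lemma div_super: "(k::nat) div q + l div q \<le> (k + l) div q"
proof (cases "q = 0")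
  case True then show ?thesis by simp
next
  case False
  have "(k div q + l div q) * q \<le> k + l"
  proof -
    have "k div q * q \<le> k" "l div q * q \<le> l" by simp_all
    then have "k div q * q + l div q * q \<le> k + l" by (rule add_le_mono)
    then show ?thesis by (simp add: add_mult_distrib)
  qed
  then show ?thesis using False by (simp add: less_eq_div_iff_mult_less_eq)
qed

theorem mainTheorem5:
  fixes p :: nat
  assumes "prime p"
  shows "(\<forall>n k l :: nat. n \<ge> k + l \<longrightarrow> a_p p n \<ge> a_p p k + a_p p l)
       \<and> (\<forall>m n :: nat. n \<ge> 1 \<longrightarrow>
            a_p p (m + n) \<ge> a_p p (m + 1) + multiplicity p (fact n :: nat))"
proof (intro conjI allI impI)
  fix n k l :: nat
  assume h: "n \<ge> k + l"
  let ?q = "p - 1"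
  have "k div ?q + l div ?q \<le> n div ?q"
    using div_super[of k ?q l] div_le_mono[OF h, of ?q] by linarith
  then have "(k div ?q + l div ?q) + g p (k div ?q + l div ?q) \<le> n div ?q + g p (n div ?q)"
    using f_mono[OF assms] by blast
  then show "a_p p n \<ge> a_p p k + a_p p l"
    using f_super[OF assms, of "k div ?q" "l div ?q"] unfolding a_p_def by linarith
next
  fix m n :: nat
  assume h: "n \<ge> 1"
  let ?q = "p - 1"
  have p2: "p \<ge> 2" using assms prime_ge_2_nat by blast
  have "(?q) * g p n \<le> n - 1" using g_bound[OF assms h] .
  then have gq: "g p n \<le> (n - 1) div ?q"
    using p2 by (simp add: less_eq_div_iff_mult_less_eq mult.commute)
  have "(m + 1) div ?q + (n - 1) div ?q \<le> (m + n) div ?q"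
    using div_super[of "m + 1" ?q "n - 1"] h by simp
  then have "((m + 1) div ?q + (n - 1) div ?q) + g p ((m + 1) div ?q + (n - 1) div ?q)
       \<le> (m + n) div ?q + g p ((m + n) div ?q)"
    using f_mono[OF assms] by blast
  then show "a_p p (m + n) \<ge> a_p p (m + 1) + g p n"
    using f_super[OF assms, of "(m + 1) div ?q" "(n - 1) div ?q"] gq
    unfolding a_p_def by linarith
qed

end
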